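(* In the rationalizable model, consider the following principal algorithm: for each agent $i=1,\dots,n$ and each opponent profile $a_{-i}\in A_{-i}$, the principal runs the single-agent binary-search procedure on agent $i$ (for each $a_i\in A_i$, use $\mathcal{O}(\log(1/\varepsilon))$ binary-search rounds to approximate to precision $\varepsilon$ the smallest $P^*(a_i)\in[0,1]$ such that agent $i$ plays $a_i$ when paid $P^*(a_i)$ on $a_i$ and $0$ on its other actions, and set $\tilde U_i(a_i,a_{-i}):=-P^*(a_i)$), while during these rounds paying every other agent $j\ne i$ according to $P_j^t(a_j')=2\cdot\mathbb{1}[a_j'=a_j]$, where $a_j$ is agent $j$'s action in $a_{-i}$; finally it outputs $\tilde U$. This algorithm $\varepsilon$-learns any game in $\mathcal{O}(nM\log(1/\varepsilon))$ rounds.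
   Context: A normal-form game has agents $i\in[n]$, finite action sets $A_i$ with $|A_i|=m_i\ge2$, $A=A_1\times\dots\times A_n$, $M=\prod_i m_i$, and utilities $U_i:A\to[0,1]$. The game is played over rounds $t=1,2,\dots$: the principal chooses payment functions $P_i^t:A_i\to\mathbb{R}_+$, creating the game $\Gamma^t$ with utilities $U_i^t(a)=U_i(a)+P_i^t(a_i)$; agents simultaneously choose actions $a_i^t$; the principal observes $a^t$. The principal initially knows only the action sets and that utilities lie in $[0,1]$. Rationalizable model: in each round each agent plays an action that survives iterated elimination of strictly dominated actions in $\Gamma^t$ (an action $a_i$ is strictly dominated if some mixed strategy $x_i\in\Delta(A_i)$ satisfies $U_i^t(x_i,a_{-i})>U_i^t(a_i,a_{-i})$ for all $a_{-i}$). The principal $\varepsilon$-learns the game if it outputs $\tilde U_i:A\to\mathbb{R}$ such that there exist $W_i:A_{-i}\to\mathbb{R}$ with $|U_i(a)+W_i(a_{-i})-\tilde U_i(a)|\le\varepsilon$ for all $i$ and $a\in A$. *)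

theory Defs
  imports "HOL-Library.FuncSet" Complex_Main
begin

text \<open>Agents are 0..n-1; agent i has actions {0..<m i}. Action profiles are
 extensional functions in PiE. Payment functions: P i b = payment to agent i for action b.\<close>

type_synonym profile = "nat \<Rightarrow> nat"
type_synonym payments = "nat \<Rightarrow> nat \<Rightarrow> real"
type_synonym history = "(payments \<times> profile) list"

definition profiles :: "nat \<Rightarrow> (nat \<Rightarrow> nat) \<Rightarrow> profile set" where
  "profiles n m = PiE {..<n} (\<lambda>i. {..<m i})"

definition num_profiles :: "nat \<Rightarrow> (nat \<Rightarrow> nat) \<Rightarrow> nat" where
  "num_profiles n m = (\<Prod>i<n. m i)"

definition util_pay :: "(nat \<Rightarrow> profile \<Rightarrow> real) \<Rightarrow> payments \<Rightarrow> nat \<Rightarrow> profile \<Rightarrow> real" where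
  "util_pay U P i a = U i a + P i (a i)"

definition strictly_dominated ::
  "nat \<Rightarrow> (nat \<Rightarrow> profile \<Rightarrow> real) \<Rightarrow> payments \<Rightarrow> (nat \<Rightarrow> nat set) \<Rightarrow> nat \<Rightarrow> nat \<Rightarrow> bool" where
  "strictly_dominated n U P S i b \<longleftrightarrow>
     (\<exists>x::nat \<Rightarrow> real. (\<forall>c\<in>S i. 0 \<le> x c) \<and> (\<Sum>c\<in>S i. x c) = 1 \<and>
        (\<forall>a\<in>PiE {..<n} S. a i = b \<longrightarrow>
            (\<Sum>c\<in>S i. x c * util_pay U P i (a(i := c))) > util_pay U P i a))"

definition elim_step ::
  "nat \<Rightarrow> (nat \<Rightarrow> profile \<Rightarrow> real) \<Rightarrow> payments \<Rightarrow> (nat \<Rightarrow> nat set) \<Rightarrow> (nat \<Rightarrow> nat set)" where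
  "elim_step n U P S = (\<lambda>i. if i < n then {b \<in> S i. \<not> strictly_dominated n U P S i b} else S i)"

definition rationalizable ::
  "nat \<Rightarrow> (nat \<Rightarrow> nat) \<Rightarrow> (nat \<Rightarrow> profile \<Rightarrow> real) \<Rightarrow> payments \<Rightarrow> nat \<Rightarrow> nat set" where
  "rationalizable n m U P i = (\<Inter>k. ((elim_step n U P ^^ k) (\<lambda>j. {..<m j})) i)"

text \<open>An agent behaviour: given the history of past rounds and the current payments,
 the profile the agents play.\<close>
definition valid_behaviour ::
  "nat \<Rightarrow> (nat \<Rightarrow> nat) \<Rightarrow> (nat \<Rightarrow> profile \<Rightarrow> real) \<Rightarrow> (history \<Rightarrow> payments \<Rightarrow> profile) \<Rightarrow> bool" where
  "valid_behaviour n m U \<beta> \<longleftrightarrow>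
     (\<forall>h P. \<beta> h P \<in> PiE {..<n} (rationalizable n m U P))"

definition test_pay :: "nat \<Rightarrow> nat \<Rightarrow> profile \<Rightarrow> real \<Rightarrow> payments" where
  "test_pay n i a p = (\<lambda>j c. if j < n then (if j = i then (if c = a i then p else 0)
                                     else (if c = a j then 2 else 0)) else 0)"

fun bsearch :: "(history \<Rightarrow> payments \<Rightarrow> profile) \<Rightarrow> nat \<Rightarrow> nat \<Rightarrow> profile \<Rightarrow> history
                \<Rightarrow> nat \<Rightarrow> real \<Rightarrow> real \<Rightarrow> real \<times> history" where
  "bsearch \<beta> n i a h 0 lo hi = (hi, h)"
| "bsearch \<beta> n i a h (Suc k) lo hi =
     (let mid = (lo + hi) / 2; P = test_pay n i a mid; act = \<beta> h P in
      if act i = a i then bsearch \<beta> n i a (h @ [(P, act)]) k lo mid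
      else bsearch \<beta> n i a (h @ [(P, act)]) k mid hi)"

fun run_tasks :: "(history \<Rightarrow> payments \<Rightarrow> profile) \<Rightarrow> nat \<Rightarrow> nat \<Rightarrow> (nat \<times> profile) list
                  \<Rightarrow> history \<Rightarrow> (nat \<Rightarrow> profile \<Rightarrow> real) \<Rightarrow> (nat \<Rightarrow> profile \<Rightarrow> real) \<times> history" where
  "run_tasks \<beta> n k [] h Ut = (Ut, h)"
| "run_tasks \<beta> n k ((i, a) # ts) h Ut =
     (let (p, h') = bsearch \<beta> n i a h k 0 1 in
      run_tasks \<beta> n k ts h' (Ut(i := (Ut i)(a := - p))))"

definition task_list :: "nat \<Rightarrow> (nat \<Rightarrow> nat) \<Rightarrow> (nat \<Rightarrow> profile list) \<Rightarrow> (nat \<times> profile) list" where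
  "task_list n m opp = concat (map (\<lambda>i. concat (map (\<lambda>c. map (\<lambda>b. (i, c(i := b))) [0..<m i]) (opp i))) [0..<n])"

text \<open>opp i enumerates the opponent profiles A_{-i} (profiles with component i erased).\<close>
definition valid_enum :: "nat \<Rightarrow> (nat \<Rightarrow> nat) \<Rightarrow> (nat \<Rightarrow> profile list) \<Rightarrow> bool" where
  "valid_enum n m opp \<longleftrightarrow> (\<forall>i<n. distinct (opp i) \<and>
       set (opp i) = (\<lambda>a. a(i := undefined)) ` profiles n m)"

definition principal_alg ::
  "(history \<Rightarrow> payments \<Rightarrow> profile) \<Rightarrow> nat \<Rightarrow> (nat \<Rightarrow> nat) \<Rightarrow> (nat \<Rightarrow> profile list) \<Rightarrow> nat
   \<Rightarrow> (nat \<Rightarrow> profile \<Rightarrow> real) \<times> history" where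
  "principal_alg \<beta> n m opp k = run_tasks \<beta> n k (task_list n m opp) [] (\<lambda>_ _. 0)"

text \<open>epsilon-learning: W i depends only on the opponent profile a_{-i}.\<close>
definition eps_learns ::
  "nat \<Rightarrow> (nat \<Rightarrow> nat) \<Rightarrow> (nat \<Rightarrow> profile \<Rightarrow> real) \<Rightarrow> (nat \<Rightarrow> profile \<Rightarrow> real) \<Rightarrow> real \<Rightarrow> bool" where
  "eps_learns n m U Ut \<epsilon> \<longleftrightarrow>
     (\<exists>W :: nat \<Rightarrow> profile \<Rightarrow> real. \<forall>i<n. \<forall>a\<in>profiles n m.
        \<bar>U i a + W i (a(i := undefined)) - Ut i a\<bar> \<le> \<epsilon>)"

end

theory Submission
  imports Defs
begin

lemma upd_PiE:
  assumes "a \<in> PiE {..<n} S" "j < n" "e \<in> S j"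
  shows "a(j := e) \<in> PiE {..<n} S"
  using assms by (auto simp: PiE_iff extensional_def)

lemma br_not_dom:
  assumes "\<forall>c\<in>S j. util_pay U P j (a'(j:=c)) \<le> util_pay U P j a'"
    "\<forall>c\<in>S j. 0 \<le> x c" "(\<Sum>c\<in>S j. x c) = 1"
  shows "\<not> ((\<Sum>c\<in>S j. x c * util_pay U P j (a'(j:=c))) > util_pay U P j a')"
proof -
  have "(\<Sum>c\<in>S j. x c * util_pay U P j (a'(j:=c))) \<le> (\<Sum>c\<in>S j. x c * util_pay U P j a')"
    by (rule sum_mono) (simp add: assms mult_left_mono)
  also have "\<dots> = util_pay U P j a'" using assms(3) by (simp add: sum_distrib_right[symmetric])
  finally show ?thesis by simp
qed

lemma br_not_dom2:
  assumes "a' \<in> PiE {..<n} S" "a' j = b"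
    "\<forall>c\<in>S j. util_pay U P j (a'(j:=c)) \<le> util_pay U P j a'"
  shows "\<not> strictly_dominated n U P S j b"
proof
  assume "strictly_dominated n U P S j b"
  then obtain x where x: "\<forall>c\<in>S j. 0 \<le> x c" "(\<Sum>c\<in>S j. x c) = 1"
    "\<forall>a\<in>PiE {..<n} S. a j = b \<longrightarrow>
            (\<Sum>c\<in>S j. x c * util_pay U P j (a(j := c))) > util_pay U P j a"
    unfolding strictly_dominated_def by blast
  show False using br_not_dom[of S j U P a' x, OF assms(3) x(1,2)] x(3) assms(1,2) by blast
qed

lemma sum_ind:
  assumes "finite S" "d \<in> S"
  shows "(\<Sum>c\<in>S. (if c = d then 1 else 0) * (f c::real)) = f d"
proof -
  have "(\<Sum>c\<in>S. (if c = d then 1 else 0) * f c) = (\<Sum>c\<in>S. if c = d then f c else 0)"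
    by (rule sum.cong) auto
  also have "\<dots> = f d" using assms by simp
  finally show ?thesis .
qed

lemma rat_char:
  fixes n :: nat and i :: nat and a :: profile and p :: real and m U c
  defines "P \<equiv> test_pay n i a p"
  assumes i: "i < n" and a: "a \<in> profiles n m"
    and Ub: "\<forall>j<n. \<forall>a\<in>profiles n m. 0 \<le> U j a \<and> U j a \<le> 1"
    and c: "c \<in> rationalizable n m U P i"
  shows "c < m i \<and> (\<forall>d<m i. util_pay U P i (a(i:=d)) \<le> util_pay U P i (a(i:=c)))"
proof -
  define S0 where "S0 = (\<lambda>j. {..<m j})"
  define S1 where "S1 = elim_step n U P S0"
  define S2 where "S2 = elim_step n U P S1"
  have aP: "a \<in> PiE {..<n} S0" using a by (simp add: profiles_def S0_def)
  have "\<forall>k. c \<in> ((elim_step n U P ^^ k) S0) i" using c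
    by (simp add: rationalizable_def S0_def)
  hence "c \<in> ((elim_step n U P ^^ 2) S0) i" by blast
  hence c2: "c \<in> S2 i" by (simp add: S2_def S1_def numeral_2_eq_2)
  have S1sub: "S1 j \<subseteq> S0 j" for j by (auto simp: S1_def elim_step_def)
  have S2sub: "S2 j \<subseteq> S1 j" for j by (auto simp: S2_def elim_step_def)
  have Pj: "P j e = (if e = a j then 2 else 0)" if "j < n" "j \<noteq> i" for j e
    using that by (simp add: P_def test_pay_def)
  have Pi: "P i e = (if e = a i then p else 0)" for e
    using i by (simp add: P_def test_pay_def)
  have one: "S1 j \<subseteq> {a j}" if j: "j < n" "j \<noteq> i" for j
  proof
    fix e assume e: "e \<in> S1 j"
    hence e0: "e \<in> S0 j" and nd: "\<not> strictly_dominated n U P S0 j e"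
      using j by (auto simp: S1_def elim_step_def)
    show "e \<in> {a j}"
    proof (rule ccontr)
      assume ne: "e \<notin> {a j}"
      have aj: "a j \<in> S0 j" using aP j by (auto simp: PiE_iff)
      have fin: "finite (S0 j)" by (simp add: S0_def)
      have "strictly_dominated n U P S0 j e"
        unfolding strictly_dominated_def
      proof (intro exI[of _ "\<lambda>c. if c = a j then 1 else 0"] conjI ballI impI)
        show "(\<Sum>c\<in>S0 j. (if c = a j then 1 else 0::real)) = 1"
          using aj fin by simp
        fix a' assume a': "a' \<in> PiE {..<n} S0" "a' j = e"
        have "(\<Sum>c\<in>S0 j. (if c = a j then 1 else 0) * util_pay U P j (a'(j := c)))
            = util_pay U P j (a'(j := a j))"
          by (rule sum_ind[OF fin aj])
        also have "\<dots> = U j (a'(j := a j)) + 2" by (simp add: util_pay_def Pj j)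
        also have "\<dots> > U j a' + 0"
        proof -
          have "a'(j := a j) \<in> profiles n m" using upd_PiE[OF a'(1) j(1) aj]
            by (simp add: profiles_def S0_def)
          moreover have "a' \<in> profiles n m" using a'(1) by (simp add: profiles_def S0_def)
          ultimately have "U j a' \<le> 1" "0 \<le> U j (a'(j := a j))" using Ub j by blast+
          then show ?thesis by linarith
        qed
        also have "U j a' + 0 = util_pay U P j a'" using a'(2) ne by (simp add: util_pay_def Pj j)
        finally show "(\<Sum>c\<in>S0 j. (if c = a j then 1 else 0) * util_pay U P j (a'(j := c))) > util_pay U P j a'" .
      qed simp
      with nd show False by simp
    qed
  qed
  have two: "a j \<in> S1 j" if j: "j < n" "j \<noteq> i" for j
  proof -
    have aj: "a j \<in> S0 j" using aP j by (auto simp: PiE_iff)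
    have "\<not> strictly_dominated n U P S0 j (a j)"
    proof (rule br_not_dom2[OF aP refl], rule ballI)
      fix e assume e: "e \<in> S0 j"
      have "a(j := e) \<in> profiles n m" using upd_PiE[OF aP j(1) e]
        by (simp add: profiles_def S0_def)
      then have "U j (a(j := e)) \<le> 1" "0 \<le> U j a" using Ub j a by blast+
      then show "util_pay U P j (a(j := e)) \<le> util_pay U P j a"
        using j by (cases "e = a j") (simp_all add: util_pay_def Pj)
    qed
    thus ?thesis using aj j by (simp add: S1_def elim_step_def)
  qed
  define g where "g d = util_pay U P i (a(i:=d))" for d
  have ai: "a i < m i" using a i by (auto simp: profiles_def PiE_iff)
  obtain ds where ds: "ds < m i" "\<forall>e<m i. g e \<le> g ds"
  proof -
    have ne: "g ` {..<m i} \<noteq> {}" using ai by auto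
    have "Max (g ` {..<m i}) \<in> g ` {..<m i}" using ne by (intro Max_in) auto
    then obtain ds where "ds < m i" "g ds = Max (g ` {..<m i})" by auto
    moreover have "\<forall>e<m i. g e \<le> Max (g ` {..<m i})" by auto
    ultimately show ?thesis using that by auto
  qed
  have three: "ds \<in> S1 i"
  proof -
    have ad: "a(i := ds) \<in> PiE {..<n} S0" using upd_PiE[OF aP i] ds by (simp add: S0_def)
    have "\<not> strictly_dominated n U P S0 i ds"
      by (rule br_not_dom2[OF ad]) (use ds in \<open>auto simp: S0_def g_def\<close>)
    thus ?thesis using ds i by (simp add: S1_def elim_step_def S0_def)
  qed
  have c1: "c \<in> S1 i" and ndc: "\<not> strictly_dominated n U P S1 i c"
    using c2 i by (auto simp: S2_def elim_step_def)
  have cm: "c < m i" using c1 S1sub by (auto simp: S0_def)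
  have "g ds \<le> g c"
  proof (rule ccontr)
    assume lt: "\<not> g ds \<le> g c"
    have fin: "finite (S1 i)" using S1sub[of i] finite_subset by (auto simp: S0_def)
    have "strictly_dominated n U P S1 i c"
      unfolding strictly_dominated_def
    proof (intro exI[of _ "\<lambda>e. if e = ds then 1 else 0"] conjI ballI impI)
      show "(\<Sum>e\<in>S1 i. (if e = ds then 1 else 0::real)) = 1"
        using three fin by simp
      fix a' assume a': "a' \<in> PiE {..<n} S1" "a' i = c"
      have eq: "a' = a(i := c)"
      proof
        fix j show "a' j = (a(i := c)) j"
        proof (cases "j < n")
          case True
          show ?thesis
          proof (cases "j = i")
            case True then show ?thesis using a'(2) by simp
          next
            case False
            have "a' j \<in> S1 j" using PiE_mem[OF a'(1)] \<open>j < n\<close> by simp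
            then show ?thesis using one[OF \<open>j < n\<close> False] False by auto
          qed
        next
          case False
          have "a' j = undefined" using PiE_arb[OF a'(1)] False by simp
          moreover have "a j = undefined" using PiE_arb[OF aP] False by simp
          ultimately show ?thesis using False i by simp
        qed
      qed
      have "(\<Sum>e\<in>S1 i. (if e = ds then 1 else 0) * util_pay U P i (a'(i := e)))
            = util_pay U P i (a'(i := ds))"
        by (rule sum_ind[OF fin three])
      also have "\<dots> = g ds" using eq by (simp add: g_def)
      also have "\<dots> > g c" using lt by simp
      also have "g c = util_pay U P i a'" using eq by (simp add: g_def)
      finally show "(\<Sum>e\<in>S1 i. (if e = ds then 1 else 0) * util_pay U P i (a'(i := e))) > util_pay U P i a'" .
    qed simp
    with ndc show False by simp
  qed
  thus ?thesis using cm ds by (auto simp: g_def)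
qed


lemma bsearch_spec:
  assumes H1: "\<forall>h mid. 0 \<le> mid \<longrightarrow> (\<beta> h (test_pay n i a mid)) i = a i \<longrightarrow> T \<le> mid"
      and H2: "\<forall>h mid. 0 \<le> mid \<longrightarrow> (\<beta> h (test_pay n i a mid)) i \<noteq> a i \<longrightarrow> mid \<le> T"
  shows "0 \<le> lo \<Longrightarrow> lo \<le> T \<Longrightarrow> T \<le> hi \<Longrightarrow>
     fst (bsearch \<beta> n i a h k lo hi) - (hi - lo) / 2^k \<le> T \<and> T \<le> fst (bsearch \<beta> n i a h k lo hi)
     \<and> length (snd (bsearch \<beta> n i a h k lo hi)) = length h + k"
proof (induction k arbitrary: h lo hi)
  case 0 thus ?case by simp
next
  case (Suc k)
  define mid where "mid = (lo + hi) / 2"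
  define P where "P = test_pay n i a mid"
  define act where "act = \<beta> h P"
  have "0 \<le> lo + hi" using Suc.prems by linarith
  hence mid0: "0 \<le> mid" unfolding mid_def by simp
  show ?case
  proof (cases "act i = a i")
    case True
    have Tm: "T \<le> mid" using H1 mid0 True by (auto simp: act_def P_def)
    have IH: "fst (bsearch \<beta> n i a (h @ [(P, act)]) k lo mid) - (mid - lo) / 2^k \<le> T
       \<and> T \<le> fst (bsearch \<beta> n i a (h @ [(P, act)]) k lo mid)
       \<and> length (snd (bsearch \<beta> n i a (h @ [(P, act)]) k lo mid)) = length (h @ [(P, act)]) + k"
      using Suc.IH[of lo mid "h @ [(P, act)]"] Tm Suc.prems by blast
    have eqb: "bsearch \<beta> n i a h (Suc k) lo hi = bsearch \<beta> n i a (h @ [(P, act)]) k lo mid"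
      using True by (simp add: Let_def mid_def P_def act_def)
    have w: "(mid - lo) / 2^k = (hi - lo) / 2^(Suc k)" by (simp add: mid_def field_simps)
    show ?thesis using IH eqb w by simp
  next
    case False
    have Tm: "mid \<le> T" using H2 mid0 False by (auto simp: act_def P_def)
    have IH: "fst (bsearch \<beta> n i a (h @ [(P, act)]) k mid hi) - (hi - mid) / 2^k \<le> T
       \<and> T \<le> fst (bsearch \<beta> n i a (h @ [(P, act)]) k mid hi)
       \<and> length (snd (bsearch \<beta> n i a (h @ [(P, act)]) k mid hi)) = length (h @ [(P, act)]) + k"
      using Suc.IH[of mid hi "h @ [(P, act)]"] Tm mid0 Suc.prems by blast
    have eqb: "bsearch \<beta> n i a h (Suc k) lo hi = bsearch \<beta> n i a (h @ [(P, act)]) k mid hi"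
      using False by (simp add: Let_def mid_def P_def act_def)
    have w: "(hi - mid) / 2^k = (hi - lo) / 2^(Suc k)" by (simp add: mid_def field_simps)
    show ?thesis using IH eqb w by simp
  qed
qed

lemma run_tasks_spec:
  assumes "\<forall>(i, a)\<in>set ts. \<forall>h. R i a (- fst (bsearch \<beta> n i a h k 0 1))
              \<and> length (snd (bsearch \<beta> n i a h k 0 1)) = length h + k"
  shows "(\<forall>i a. ((i, a) \<in> set ts \<or> R i a (Ut i a)) \<longrightarrow> R i a (fst (run_tasks \<beta> n k ts h Ut) i a))
     \<and> length (snd (run_tasks \<beta> n k ts h Ut)) = length h + k * length ts"
  using assms
proof (induction ts arbitrary: h Ut)
  case Nil then show ?case by simp
next
  case (Cons t ts)
  obtain i0 a0 where t: "t = (i0, a0)" by force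
  obtain p h' where b: "bsearch \<beta> n i0 a0 h k 0 1 = (p, h')" by force
  define Ut1 where "Ut1 = Ut(i0 := (Ut i0)(a0 := - p))"
  have eq: "run_tasks \<beta> n k (t # ts) h Ut = run_tasks \<beta> n k ts h' Ut1"
    by (simp add: t b Ut1_def)
  have "R i0 a0 (- fst (bsearch \<beta> n i0 a0 h k 0 1))
              \<and> length (snd (bsearch \<beta> n i0 a0 h k 0 1)) = length h + k"
    using Cons.prems t by auto
  hence Rp: "R i0 a0 (- p)" and lh: "length h' = length h + k" using b by auto
  have IH: "(\<forall>i a. ((i, a) \<in> set ts \<or> R i a (Ut1 i a)) \<longrightarrow> R i a (fst (run_tasks \<beta> n k ts h' Ut1) i a))
     \<and> length (snd (run_tasks \<beta> n k ts h' Ut1)) = length h' + k * length ts"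
    using Cons.IH[where h=h' and Ut=Ut1] Cons.prems by auto
  show ?case
  proof (intro conjI allI impI)
    fix i a assume A: "(i, a) \<in> set (t # ts) \<or> R i a (Ut i a)"
    have "(i, a) \<in> set ts \<or> R i a (Ut1 i a)"
    proof (cases "(i, a) = (i0, a0)")
      case True then show ?thesis using Rp by (auto simp: Ut1_def)
    next
      case False then show ?thesis using A t by (auto simp: Ut1_def)
    qed
    then have "R i a (fst (run_tasks \<beta> n k ts h' Ut1) i a)" using IH by blast
    then show "R i a (fst (run_tasks \<beta> n k (t # ts) h Ut) i a)" using eq by simp
  next
    show "length (snd (run_tasks \<beta> n k (t # ts) h Ut)) = length h + k * length (t # ts)"
      using IH eq lh by simp
  qed
qed


definition Mx :: "(nat \<Rightarrow> nat) \<Rightarrow> (nat \<Rightarrow> profile \<Rightarrow> real) \<Rightarrow> nat \<Rightarrow> profile \<Rightarrow> real" where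
  "Mx m U i a = Max ((\<lambda>d. U i (a(i := d))) ` {..<m i})"

lemma task_spec:
  assumes i: "i < n" and a: "a \<in> profiles n m"
    and Ub: "\<forall>j<n. \<forall>a\<in>profiles n m. 0 \<le> U j a \<and> U j a \<le> 1"
    and vb: "valid_behaviour n m U \<beta>"
  shows "\<bar>U i a - Mx m U i a - (- fst (bsearch \<beta> n i a h k 0 1))\<bar> \<le> 1 / 2^k
    \<and> length (snd (bsearch \<beta> n i a h k 0 1)) = length h + k"
proof -
  define T where "T = Mx m U i a - U i a"
  have ai: "a i < m i" using a i by (auto simp: profiles_def PiE_iff)
  have fin: "finite ((\<lambda>d. U i (a(i := d))) ` {..<m i})" by simp
  have ne: "(\<lambda>d. U i (a(i := d))) ` {..<m i} \<noteq> {}" using ai by auto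
  have prof: "a(i := d) \<in> profiles n m" if "d < m i" for d
    using upd_PiE[of a n "\<lambda>j. {..<m j}" i d] a i that by (simp add: profiles_def)
  have ge: "U i (a(i := d)) \<le> Mx m U i a" if "d < m i" for d
    unfolding Mx_def using fin that by (intro Max_ge) auto
  have le: "Mx m U i a \<le> r" if "\<forall>d<m i. U i (a(i := d)) \<le> r" for r
    unfolding Mx_def using fin ne that by (subst Max_le_iff) auto
  have tp: "test_pay n i a mid i d = (if d = a i then mid else 0)" for mid d
    using i by (simp add: test_pay_def)
  have ua: "util_pay U (test_pay n i a mid) i (a(i := d)) = U i (a(i := d)) + (if d = a i then mid else 0)" for mid d
    by (simp add: util_pay_def tp)
  have uaa: "util_pay U (test_pay n i a mid) i a = U i a + mid" for mid
    using ua[of mid "a i"] by simp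
  have act: "(\<beta> h' (test_pay n i a mid)) i < m i \<and> (\<forall>d<m i. util_pay U (test_pay n i a mid) i (a(i:=d))
      \<le> util_pay U (test_pay n i a mid) i (a(i:=(\<beta> h' (test_pay n i a mid)) i)))" for h' mid
  proof -
    have "\<beta> h' (test_pay n i a mid) \<in> PiE {..<n} (rationalizable n m U (test_pay n i a mid))"
      using vb by (simp add: valid_behaviour_def)
    hence "(\<beta> h' (test_pay n i a mid)) i \<in> rationalizable n m U (test_pay n i a mid) i"
      using PiE_mem i by fastforce
    thus ?thesis by (rule rat_char[OF i a Ub])
  qed
  have H1: "\<forall>h mid. 0 \<le> mid \<longrightarrow> (\<beta> h (test_pay n i a mid)) i = a i \<longrightarrow> T \<le> mid"
  proof (intro allI impI)
    fix h' mid assume m0: "0 \<le> mid" and eqa: "(\<beta> h' (test_pay n i a mid)) i = a i"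
    have "\<forall>d<m i. U i (a(i := d)) \<le> U i a + mid"
    proof (intro allI impI)
      fix d assume d: "d < m i"
      have "util_pay U (test_pay n i a mid) i (a(i:=d)) \<le> util_pay U (test_pay n i a mid) i (a(i:= a i))"
        using act[of h' mid] d eqa by simp
      thus "U i (a(i := d)) \<le> U i a + mid" using m0 by (simp add: ua uaa split: if_splits)
    qed
    from le[OF this] show "T \<le> mid" by (simp add: T_def)
  qed
  have H2: "\<forall>h mid. 0 \<le> mid \<longrightarrow> (\<beta> h (test_pay n i a mid)) i \<noteq> a i \<longrightarrow> mid \<le> T"
  proof (intro allI impI)
    fix h' mid assume m0: "0 \<le> mid" and nea: "(\<beta> h' (test_pay n i a mid)) i \<noteq> a i"
    define c where "c = (\<beta> h' (test_pay n i a mid)) i"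
    have cm: "c < m i" using act[of h' mid] by (simp add: c_def)
    have "util_pay U (test_pay n i a mid) i (a(i:=a i)) \<le> util_pay U (test_pay n i a mid) i (a(i:= c))"
      using act[of h' mid] ai unfolding c_def by blast
    hence "U i a + mid \<le> U i (a(i := c))" using nea by (simp add: ua uaa c_def)
    thus "mid \<le> T" using ge[OF cm] by (simp add: T_def)
  qed
  have T0: "0 \<le> T" using ge[OF ai] by (simp add: T_def)
  have T1: "T \<le> 1"
  proof -
    have "\<forall>d<m i. U i (a(i := d)) \<le> 1" using prof Ub i by blast
    hence "Mx m U i a \<le> 1" by (rule le)
    moreover have "0 \<le> U i a" using Ub i a by blast
    ultimately show ?thesis by (simp add: T_def)
  qed
  have "fst (bsearch \<beta> n i a h k 0 1) - (1 - 0) / 2^k \<le> T \<and> T \<le> fst (bsearch \<beta> n i a h k 0 1)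
     \<and> length (snd (bsearch \<beta> n i a h k 0 1)) = length h + k"
    using bsearch_spec[where \<beta>=\<beta> and n=n and i=i and a=a and T=T and lo=0 and hi=1 and h=h and k=k, OF H1 H2] T0 T1
    by simp
  thus ?thesis by (simp add: T_def abs_le_iff)
qed


lemma tasks_valid:
  assumes ve: "valid_enum n m opp" and t: "(i, a) \<in> set (task_list n m opp)"
  shows "i < n \<and> a \<in> profiles n m"
proof -
  from t obtain c b where i: "i < n" and c: "c \<in> set (opp i)" and b: "b < m i" and ac: "a = c(i := b)"
    by (auto simp: task_list_def)
  from c ve i obtain a' where a': "a' \<in> profiles n m" and ca: "c = a'(i := undefined)"
    by (auto simp: valid_enum_def)
  have "a = a'(i := b)" using ac ca by simp
  moreover have "a'(i := b) \<in> profiles n m"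
    using upd_PiE[of a' n "\<lambda>j. {..<m j}" i b] a' i b by (simp add: profiles_def)
  ultimately show ?thesis using i by simp
qed

lemma tasks_cover:
  assumes ve: "valid_enum n m opp" and i: "i < n" and a: "a \<in> profiles n m"
  shows "(i, a) \<in> set (task_list n m opp)"
proof -
  have so: "set (opp i) = (\<lambda>a. a(i := undefined)) ` profiles n m"
    using ve i unfolding valid_enum_def by blast
  have c: "a(i := undefined) \<in> set (opp i)" unfolding so using a by (rule imageI)
  have ai: "a i < m i" using a i by (auto simp: profiles_def PiE_iff)
  define f where "f = (\<lambda>c. map (\<lambda>b. (i, c(i := b))) [0..<m i])"
  define g where "g = (\<lambda>i. concat (map (\<lambda>c. map (\<lambda>b. (i, c(i := b))) [0..<m i]) (opp i)))"
  have aa: "(a(i := undefined))(i := a i) = a" by simp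
  have "(i, (a(i := undefined))(i := a i)) \<in> set (f (a(i := undefined)))"
    unfolding f_def set_map using ai by (intro imageI) simp
  hence 1: "(i, a) \<in> set (f (a(i := undefined)))" unfolding aa .
  have "(i, a) \<in> set (concat (map f (opp i)))"
    unfolding set_concat set_map using 1 c by blast
  hence 2: "(i, a) \<in> set (g i)" unfolding g_def f_def .
  have "(i, a) \<in> set (concat (map g [0..<n]))"
    unfolding set_concat set_map using 2 i by auto
  thus ?thesis unfolding task_list_def g_def .
qed

lemma tasks_len:
  assumes ve: "valid_enum n m opp"
  shows "length (task_list n m opp) \<le> n * num_profiles n m"
proof -
  have card_prof: "card (profiles n m) = num_profiles n m"
    by (simp add: profiles_def num_profiles_def card_PiE)
  have finp: "finite (profiles n m)" by (simp add: profiles_def finite_PiE)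
  have per: "length (opp i) * m i \<le> num_profiles n m" if i: "i < n" for i
  proof -
    define E where "E = (\<lambda>a. a(i := undefined)) ` profiles n m"
    have d: "distinct (opp i)" and se: "set (opp i) = E" using ve i by (auto simp: valid_enum_def E_def)
    have "length (opp i) = card E" using distinct_card[OF d] se by simp
    hence "length (opp i) * m i = card (E \<times> {..<m i})" by (simp add: card_cartesian_product)
    also have "\<dots> \<le> card (profiles n m)"
    proof (rule card_inj_on_le[where f="\<lambda>(c, b). c(i := b)"])
      show "inj_on (\<lambda>(c, b). c(i := b)) (E \<times> {..<m i})"
      proof (rule inj_onI)
        fix x y assume x: "x \<in> E \<times> {..<m i}" and y: "y \<in> E \<times> {..<m i}"
          and eq0: "(\<lambda>(c, b). c(i := b)) x = (\<lambda>(c, b). c(i := b)) y"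
        obtain c b where xc: "x = (c, b)" by force
        obtain c' b' where yc: "y = (c', b')" by force
        have eq: "c(i := b) = c'(i := b')" using eq0 xc yc by simp
        have ci: "c i = undefined" "c' i = undefined" using x y xc yc by (auto simp: E_def)
        have "b = b'" using fun_cong[OF eq, of i] by simp
        moreover have "c = c'"
        proof
          fix j show "c j = c' j" using fun_cong[OF eq, of j] ci by (cases "j = i") auto
        qed
        ultimately show "x = y" using xc yc by simp
      qed
      show "(\<lambda>(c, b). c(i := b)) ` (E \<times> {..<m i}) \<subseteq> profiles n m"
      proof clarify
        fix c b assume "c \<in> E" "b < m i"
        then obtain a' where a': "a' \<in> profiles n m" and "c = a'(i := undefined)" and "b < m i"
          by (auto simp: E_def)
        then show "c(i := b) \<in> profiles n m"
          using upd_PiE[of a' n "\<lambda>j. {..<m j}" i b] i by (simp add: profiles_def)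
      qed
      show "finite (profiles n m)" by (rule finp)
    qed
    finally show ?thesis using card_prof by simp
  qed
  have "length (task_list n m opp) = (\<Sum>i\<leftarrow>[0..<n]. length (opp i) * m i)"
    by (simp add: task_list_def length_concat comp_def sum_list_triv)
  also have "\<dots> = (\<Sum>i<n. length (opp i) * m i)"
    by (simp add: sum_list_distinct_conv_sum_set atLeast0LessThan)
  also have "\<dots> \<le> (\<Sum>i<n. num_profiles n m)" by (rule sum_mono) (simp add: per)
  also have "\<dots> = n * num_profiles n m" by simp
  finally show ?thesis .
qed


lemma Mx_erase: "Mx m U i (a(i := undefined)) = Mx m U i a"
  by (simp add: Mx_def)

theorem theorem4p2:
  "\<exists>C::real. \<forall>(n::nat) (m::nat \<Rightarrow> nat) (U::nat \<Rightarrow> profile \<Rightarrow> real) (\<epsilon>::real)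
       (\<beta>::history \<Rightarrow> payments \<Rightarrow> profile) (opp::nat \<Rightarrow> profile list).
     (\<forall>i<n. 2 \<le> m i) \<longrightarrow>
     (\<forall>i<n. \<forall>a\<in>profiles n m. 0 \<le> U i a \<and> U i a \<le> 1) \<longrightarrow>
     0 < \<epsilon> \<longrightarrow> \<epsilon> \<le> 1/2 \<longrightarrow>
     valid_behaviour n m U \<beta> \<longrightarrow> valid_enum n m opp \<longrightarrow>
     (let (Ut, h) = principal_alg \<beta> n m opp (nat \<lceil>log 2 (1/\<epsilon>)\<rceil>) in
        eps_learns n m U Ut \<epsilon> \<and>
        real (length h) \<le> C * real n * real (num_profiles n m) * ln (1/\<epsilon>))"
proof (intro exI[of _ "2 / ln 2"] allI impI)
  fix n :: nat and m :: "nat \<Rightarrow> nat" and U :: "nat \<Rightarrow> profile \<Rightarrow> real" and \<epsilon> :: real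
    and \<beta> :: "history \<Rightarrow> payments \<Rightarrow> profile" and opp :: "nat \<Rightarrow> profile list"
  assume m2: "\<forall>i<n. 2 \<le> m i" and Ub: "\<forall>i<n. \<forall>a\<in>profiles n m. 0 \<le> U i a \<and> U i a \<le> 1"
    and e0: "0 < \<epsilon>" and e1: "\<epsilon> \<le> 1/2" and vb: "valid_behaviour n m U \<beta>"
    and ve: "valid_enum n m opp"
  define k where "k = nat \<lceil>log 2 (1/\<epsilon>)\<rceil>"
  define tl where "tl = task_list n m opp"
  obtain Ut h where pa: "principal_alg \<beta> n m opp k = (Ut, h)" by force
  define R where "R = (\<lambda>i a v. \<bar>U i a - Mx m U i a - v\<bar> \<le> 1 / 2^k)"
  have spec: "\<forall>(i, a)\<in>set tl. \<forall>h. R i a (- fst (bsearch \<beta> n i a h k 0 1))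
              \<and> length (snd (bsearch \<beta> n i a h k 0 1)) = length h + k"
  proof (intro ballI allI, clarify)
    fix i a h assume "(i, a) \<in> set tl"
    hence "i < n \<and> a \<in> profiles n m" using tasks_valid[OF ve] by (simp add: tl_def)
    thus "R i a (- fst (bsearch \<beta> n i a h k 0 1))
              \<and> length (snd (bsearch \<beta> n i a h k 0 1)) = length h + k"
      using task_spec[of i n a m U \<beta> h k] Ub vb unfolding R_def by blast
  qed
  have rt: "(\<forall>i a. ((i, a) \<in> set tl \<or> R i a ((\<lambda>_ _. 0) i a)) \<longrightarrow> R i a (fst (run_tasks \<beta> n k tl [] (\<lambda>_ _. 0)) i a))
     \<and> length (snd (run_tasks \<beta> n k tl [] (\<lambda>_ _. 0))) = k * length tl"
    using run_tasks_spec[where h="[]" and Ut="\<lambda>_ _. 0", OF spec] by simp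
  have pa': "run_tasks \<beta> n k tl [] (\<lambda>_ _. 0) = (Ut, h)" using pa by (simp add: principal_alg_def tl_def)
  have RR: "R i a (Ut i a)" if "(i, a) \<in> set tl" for i a using rt pa' that by simp
  have len: "length h = k * length tl" using rt pa' by simp
  define x where "x = 1 / \<epsilon>"
  have x2: "2 \<le> x" using e0 e1 by (simp add: x_def field_simps)
  have lx1: "1 \<le> log 2 x" using x2 by simp
  have kge: "log 2 x \<le> real k" unfolding k_def x_def[symmetric] by linarith
  have kle: "real k \<le> 2 * log 2 x" unfolding k_def x_def[symmetric] using lx1
    by (simp add: ceiling_le_iff) linarith
  have pk: "x \<le> 2 ^ k"
  proof -
    have "x = 2 powr (log 2 x)" using x2 by simp
    also have "\<dots> \<le> 2 powr (real k)" using kge by (intro powr_mono) auto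
    also have "\<dots> = 2 ^ k" by (simp add: powr_realpow)
    finally show ?thesis .
  qed
  have acc: "1 / 2^k \<le> \<epsilon>"
  proof -
    have "1 / 2^k \<le> 1 / x" using pk x2 by (intro divide_left_mono) auto
    thus ?thesis by (simp add: x_def)
  qed
  have learn: "eps_learns n m U Ut \<epsilon>"
    unfolding eps_learns_def
  proof (intro exI[of _ "\<lambda>i c. - Mx m U i c"] allI impI ballI)
    fix i a assume i: "i < n" and a: "a \<in> profiles n m"
    have "(i, a) \<in> set tl" using tasks_cover[OF ve i a] by (simp add: tl_def)
    hence "R i a (Ut i a)" by (rule RR)
    thus "\<bar>U i a + - Mx m U i (a(i := undefined)) - Ut i a\<bar> \<le> \<epsilon>"
      using acc by (simp add: R_def Mx_erase)
  qed
  have lenb: "real (length h) \<le> 2 / ln 2 * real n * real (num_profiles n m) * ln (1 / \<epsilon>)"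
  proof -
    have L: "real (length tl) \<le> real n * real (num_profiles n m)"
      using tasks_len[OF ve] by (simp add: tl_def flip: of_nat_mult)
    have "real (length h) = real k * real (length tl)" by (simp add: len)
    also have "\<dots> \<le> (2 * log 2 x) * (real n * real (num_profiles n m))"
      using kle L by (intro mult_mono) auto
    also have "\<dots> = 2 / ln 2 * real n * real (num_profiles n m) * ln (1 / \<epsilon>)"
      by (simp add: log_def x_def)
    finally show ?thesis .
  qed
  show "let (Ut, h) = principal_alg \<beta> n m opp (nat \<lceil>log 2 (1/\<epsilon>)\<rceil>) in
        eps_learns n m U Ut \<epsilon> \<and>
        real (length h) \<le> 2 / ln 2 * real n * real (num_profiles n m) * ln (1/\<epsilon>)"
    unfolding k_def[symmetric] pa using learn lenb by simp
qed

end
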